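(* Let $A\in\mathbb{R}^{2\times2}$ be symmetric positive definite and $E=\{x\in\mathbb{R}^2:x^{\top}A^{-1}x=1\}$. For every $x_0\in E$ there exists a parallelogram $P$ inscribed in $E$ having $x_0$ as a vertex with \[ S(P)=4\sqrt{\det A}\,\sqrt{\operatorname{tr}(A^{-1})}=4\sqrt{\operatorname{tr}(A)}. \]
   Context: A centred parallelogram with linearly independent edge vectors $v_1,v_2$ is $P=\{t_1v_1+t_2v_2:|t_i|\le\tfrac12\}$ with vertices $\tfrac12(\pm v_1\pm v_2)$; it is inscribed in $E$ if all four vertices lie on $E$. Here $S(P)$ (the total measure of the facets, i.e. the edges) is the perimeter $2(\|v_1\|+\|v_2\|)$. *)

theory Defs
  imports "HOL-Analysis.Analysis"
begin

definition sym_pos_def_matrix :: "real^2^2 \<Rightarrow> bool" where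
  "sym_pos_def_matrix A \<longleftrightarrow> transpose A = A \<and> (\<forall>x. x \<noteq> 0 \<longrightarrow> x \<bullet> (A *v x) > 0)"

definition ellipse_of :: "real^2^2 \<Rightarrow> (real^2) set" where
  "ellipse_of A = {x. x \<bullet> (matrix_inv A *v x) = 1}"

definition pair_lin_indep :: "real^2 \<Rightarrow> real^2 \<Rightarrow> bool" where
  "pair_lin_indep v1 v2 \<longleftrightarrow> (\<forall>a b. a *\<^sub>R v1 + b *\<^sub>R v2 = 0 \<longrightarrow> a = 0 \<and> b = 0)"

text \<open>Vertices (1/2)(+-v1 +- v2) of the centred parallelogram with edge vectors v1, v2.\<close>
definition par_vertices :: "real^2 \<Rightarrow> real^2 \<Rightarrow> (real^2) set" where
  "par_vertices v1 v2 = {(1/2) *\<^sub>R (s *\<^sub>R v1 + t *\<^sub>R v2) | s t. s \<in> {-1, 1} \<and> t \<in> {-1, 1}}"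

definition inscribed_in :: "real^2 \<Rightarrow> real^2 \<Rightarrow> (real^2) set \<Rightarrow> bool" where
  "inscribed_in v1 v2 E \<longleftrightarrow> pair_lin_indep v1 v2 \<and> par_vertices v1 v2 \<subseteq> E"

definition par_perimeter :: "real^2 \<Rightarrow> real^2 \<Rightarrow> real" where
  "par_perimeter v1 v2 = 2 * (norm v1 + norm v2)"

end

theory Submission
  imports Defs
begin


lemma sum_sqrt_eq:
  fixes X Y T t :: real
  assumes "X \<ge> 0" "Y \<ge> 0" "X + Y = 2*T" "X*Y = (2*t - T)^2" "2*t - T \<ge> 0"
  shows "sqrt X + sqrt Y = 2 * sqrt t"
proof -
  have "sqrt X * sqrt Y = 2*t - T"
    using assms by (simp add: real_sqrt_mult[symmetric])
  moreover have "(sqrt X + sqrt Y)^2 = X + Y + 2 * (sqrt X * sqrt Y)"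
    using assms by (simp add: power2_sum)
  ultimately have "(sqrt X + sqrt Y)^2 = 4*t"
    using assms by simp
  have "sqrt X + sqrt Y = sqrt (4*t)"
  proof (rule real_sqrt_unique[symmetric])
    show "(sqrt X + sqrt Y)^2 = 4*t" by fact
    show "0 \<le> sqrt X + sqrt Y" using assms by simp
  qed
  also have "\<dots> = 2 * sqrt t" by (simp add: real_sqrt_mult)
  finally show ?thesis .
qed

lemma core:
  fixes a b c p1 p2 :: real
  assumes a: "a > 0" and d: "a*c - b^2 > 0"
    and Q: "c*p1^2 - 2*b*p1*p2 + a*p2^2 = a*c - b^2"
  defines "d \<equiv> a*c - b^2" and "t \<equiv> a + c"
    and "z1 \<equiv> b*p1 - a*p2" and "z2 \<equiv> c*p1 - b*p2"
  defines "w1 \<equiv> a*z1 + b*z2" and "w2 \<equiv> b*z1 + c*z2"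
  defines "N \<equiv> c*w1^2 - 2*b*w1*w2 + a*w2^2"
  defines "D \<equiv> N / d"
  defines "q1 \<equiv> w1 / sqrt D" and "q2 \<equiv> w2 / sqrt D"
  shows "D > 0" "c*q1^2 - 2*b*q1*q2 + a*q2^2 = d"
    "p1*q2 - p2*q1 \<noteq> 0"
    "sqrt ((p1+q1)^2 + (p2+q2)^2) + sqrt ((p1-q1)^2 + (p2-q2)^2) = 2 * sqrt t"
proof -
  have d0: "d > 0" using d d_def by simp
  have p0: "p1 \<noteq> 0 \<or> p2 \<noteq> 0" using Q d by auto
  have ez1: "a*z2 - b*z1 = d*p1" unfolding z1_def z2_def d_def by algebra
  have ez2: "b*z2 - c*z1 = d*p2" unfolding z1_def z2_def d_def by algebra
  have z0: "z1 \<noteq> 0 \<or> z2 \<noteq> 0"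
    using p0 ez1 ez2 d0 by auto
  have ew1: "a*w2 - b*w1 = d*z2" unfolding w1_def w2_def d_def by algebra
  have ew2: "b*w2 - c*w1 = - d*z1" unfolding w1_def w2_def d_def by algebra
  have w0: "w1 \<noteq> 0 \<or> w2 \<noteq> 0"
    using z0 ew1 ew2 d0 by auto
  have "a*N = (a*w2 - b*w1)^2 + d*w1^2" unfolding N_def d_def by algebra
  moreover have "(a*w2 - b*w1)^2 + d*w1^2 > 0"
    using w0 d0 a by (cases "w1 = 0") (auto intro: add_pos_nonneg add_nonneg_pos)
  ultimately have N0: "N > 0" using a by (metis zero_less_mult_pos)
  show D0: "D > 0" unfolding D_def using N0 d0 by simp
  have sD: "sqrt D ^ 2 = D" using D0 by simp
  show "c*q1^2 - 2*b*q1*q2 + a*q2^2 = d"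
  proof -
    have "c*q1^2 - 2*b*q1*q2 + a*q2^2 = N / D"
      unfolding q1_def q2_def N_def using sD D0 by (simp add: power_divide field_simps)
    also have "\<dots> = d" unfolding D_def using N0 d0 by simp
    finally show ?thesis .
  qed
  have cr: "p1*w2 - p2*w1 = z1^2 + z2^2" unfolding w1_def w2_def z1_def z2_def by algebra
  have "z1^2 + z2^2 > 0" using z0 by (simp add: sum_power2_gt_zero_iff)
  hence "p1*w2 - p2*w1 \<noteq> 0" using cr by linarith
  moreover have "p1*q2 - p2*q1 = (p1*w2 - p2*w1) / sqrt D"
    unfolding q1_def q2_def by (simp add: diff_divide_distrib)
  ultimately show "p1*q2 - p2*q1 \<noteq> 0" using D0 by simp
  define r where "r = p1^2 + p2^2"
  define W where "W = w1^2 + w2^2"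
  define PW where "PW = p1*w1 + p2*w2"
  have eN: "N = d*((t^2 - d)*(c*p1^2 - 2*b*p1*p2 + a*p2^2) - t*d*r)"
    unfolding N_def w1_def w2_def z1_def z2_def d_def t_def r_def by algebra
  have Qd: "c*p1^2 - 2*b*p1*p2 + a*p2^2 = d" using Q unfolding d_def .
  have eD: "D = d*(t^2 - d - t*r)"
  proof -
    have "D = ((t^2 - d)*d - t*d*r)" unfolding D_def eN Qd using d0 by simp
    thus ?thesis by (simp add: algebra_simps)
  qed
  have eW0: "W = (t^3 - 2*t*d)*(c*p1^2 - 2*b*p1*p2 + a*p2^2) + (d^2 - t^2*d)*r"
    unfolding W_def w1_def w2_def z1_def z2_def d_def t_def r_def by algebra
  have eW: "W = d*(t^3 - 2*t*d + (d - t^2)*r)" unfolding eW0 Qd by (simp add: algebra_simps power2_eq_square)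
  have eL0: "PW^2 + (t*(c*p1^2 - 2*b*p1*p2 + a*p2^2) - d*r)^2 = r*W"
    unfolding PW_def W_def w1_def w2_def z1_def z2_def d_def t_def r_def by algebra
  have eL: "PW^2 = r*W - (t*d - d*r)^2" using eL0 unfolding Qd by simp
  define T where "T = r + W / D"
  define P where "P = PW / sqrt D"
  have P2: "P^2 = PW^2 / D" unfolding P_def using sD by (simp add: power_divide)
  have key: "t*T - t^2 = P^2"
  proof -
    have "t*(r*D + W) - t^2*D = PW^2" unfolding eD eW eL by algebra
    thus ?thesis unfolding T_def P2 using D0 by (simp add: field_simps)
  qed
  have Tle: "T \<le> 2*t"
  proof -
    have "2*t*D - r*D - W = d*(t*(t-r)^2)" unfolding eD eW by algebra
    moreover have "t > 0"
    proof -
      have "c > 0" using a d by (smt (verit) mult_nonneg_nonneg zero_le_power2 mult_le_0_iff)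
      thus ?thesis using a unfolding t_def by simp
    qed
    ultimately have "2*t*D - r*D - W \<ge> 0" using d0 by simp
    thus ?thesis unfolding T_def using D0 by (simp add: field_simps)
  qed
  have X: "(p1+q1)^2 + (p2+q2)^2 = T + 2*P"
    unfolding T_def P_def r_def W_def PW_def q1_def q2_def using sD D0
    by (simp add: power2_sum power_divide add_divide_distrib algebra_simps)
  have Y: "(p1-q1)^2 + (p2-q2)^2 = T - 2*P"
    unfolding T_def P_def r_def W_def PW_def q1_def q2_def using sD D0
    by (simp add: power2_diff power_divide add_divide_distrib diff_divide_distrib algebra_simps)
  show "sqrt ((p1+q1)^2 + (p2+q2)^2) + sqrt ((p1-q1)^2 + (p2-q2)^2) = 2 * sqrt t"
    unfolding X Y
  proof (rule sum_sqrt_eq)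
    show "0 \<le> T + 2*P" unfolding X[symmetric] by simp
    show "0 \<le> T - 2*P" unfolding Y[symmetric] by simp
    show "T + 2*P + (T - 2*P) = 2*T" by simp
    show "(T + 2*P) * (T - 2*P) = (2*t - T)^2" using key by algebra
    show "0 \<le> 2*t - T" using Tle by simp
  qed
qed

lemma quad2: "(x::real^2) \<bullet> (M *v x) = M$1$1 * x$1^2 + (M$1$2 + M$2$1) * x$1 * x$2 + M$2$2 * x$2^2"
  by (simp add: inner_vec_def sum_2 matrix_vector_mult_def algebra_simps power2_eq_square)

lemma norm2: "norm (x::real^2) = sqrt (x$1^2 + x$2^2)"
  by (simp add: norm_vec_def L2_set_def sum_2)

lemma inv_unique2:
  fixes A M :: "real^2^2"
  assumes "A ** M = mat 1" "M ** A = mat 1"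
  shows "matrix_inv A = M"
proof -
  have ex: "\<exists>A'. A ** A' = mat 1 \<and> A' ** A = mat 1" using assms by blast
  let ?B = "matrix_inv A"
  have B: "A ** ?B = mat 1 \<and> ?B ** A = mat 1"
    unfolding matrix_inv_def using someI_ex[OF ex] by simp
  have "?B = ?B ** (A ** M)" using assms by (simp add: matrix_mul_rid)
  also have "\<dots> = (?B ** A) ** M" by (simp add: matrix_mul_assoc)
  also have "\<dots> = M" using B by (simp add: matrix_mul_lid)
  finally show ?thesis .
qed

theorem corollary4p8:
  fixes A :: "real^2^2" and x0 :: "real^2"
  assumes "sym_pos_def_matrix A"
    and "x0 \<in> ellipse_of A"
  shows "\<exists>v1 v2. inscribed_in v1 v2 (ellipse_of A) \<and> x0 \<in> par_vertices v1 v2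
           \<and> par_perimeter v1 v2 = 4 * sqrt (det A) * sqrt (trace (matrix_inv A))
           \<and> par_perimeter v1 v2 = 4 * sqrt (trace A)"
proof -
  define a where "a = A$1$1"
  define b where "b = A$1$2"
  define c where "c = A$2$2"
  define d where "d = a*c - b^2"
  have symA: "transpose A = A" and pd: "\<And>x. x \<noteq> 0 \<Longrightarrow> x \<bullet> (A *v x) > 0"
    using assms(1) unfolding sym_pos_def_matrix_def by auto
  have b21: "A$2$1 = b"
  proof -
    have "(transpose A)$1$2 = A$1$2" using symA by simp
    thus ?thesis unfolding b_def transpose_def by simp
  qed
  have a0: "a > 0"
  proof -
    have "(vector [1, 0] :: real^2) \<noteq> 0" by (simp add: vec_eq_iff forall_2)
    from pd[OF this] show ?thesis unfolding quad2 a_def by simp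
  qed
  have d0: "d > 0"
  proof -
    have "(vector [b, -a] :: real^2) \<noteq> 0" using a0 by (simp add: vec_eq_iff forall_2)
    from pd[OF this] have "a*b^2 + (b + b)*b*(-a) + c*(-a)^2 > 0"
      unfolding quad2 a_def b_def c_def b21[unfolded b_def] by simp
    hence "a * d > 0" unfolding d_def by (simp add: algebra_simps power2_eq_square)
    thus ?thesis using a0 by (simp add: zero_less_mult_iff)
  qed
  define Mi :: "real^2^2" where "Mi = vector [vector [c/d, -b/d], vector [-b/d, a/d]]"
  have Aent: "A$1$1 = a" "A$1$2 = b" "A$2$1 = b" "A$2$2 = c" using b21 by (auto simp: a_def b_def c_def)
  have nz: "a*(a*(c*c)) + b*(b*(b*b)) \<noteq> a*(b*(b*(c*2)))"
  proof -
    have "a*(a*(c*c)) + b*(b*(b*b)) - a*(b*(b*(c*2))) = d*d"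
      by (simp add: d_def algebra_simps power2_eq_square)
    moreover have "d*d > 0" using d0 by simp
    ultimately show ?thesis by linarith
  qed
  have inv: "matrix_inv A = Mi"
  proof (rule inv_unique2)
    show "A ** Mi = mat 1" using d0 unfolding Mi_def
      by (simp add: vec_eq_iff forall_2 matrix_matrix_mult_def sum_2 mat_def Aent d_def field_simps power2_eq_square nz)
    show "Mi ** A = mat 1" using d0 unfolding Mi_def
      by (simp add: vec_eq_iff forall_2 matrix_matrix_mult_def sum_2 mat_def Aent d_def field_simps power2_eq_square nz)
  qed
  have ell: "x \<in> ellipse_of A \<longleftrightarrow> c*x$1^2 - 2*b*x$1*x$2 + a*x$2^2 = d" for x :: "real^2"
  proof -
    have "x \<in> ellipse_of A \<longleftrightarrow> (c*x$1^2 - 2*b*x$1*x$2 + a*x$2^2) / d = 1"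
      unfolding ellipse_of_def inv quad2 Mi_def using d0 by (simp add: field_simps)
    moreover have "E / d = 1 \<longleftrightarrow> E = d" for E using d0 by (simp add: divide_eq_eq)
    ultimately show ?thesis by simp
  qed
  have detA: "det A = d" unfolding det_2 Aent d_def by (simp add: power2_eq_square)
  have trA: "trace A = a + c" unfolding trace_def sum_2 Aent by simp
  have trB: "trace (matrix_inv A) = (a + c) / d" unfolding inv trace_def sum_2 Mi_def
    by (simp add: add_divide_distrib)
  define p1 where "p1 = x0$1"
  define p2 where "p2 = x0$2"
  have Q: "c*p1^2 - 2*b*p1*p2 + a*p2^2 = a*c - b^2"
    using assms(2) unfolding ell p1_def p2_def d_def .
  define z1 where "z1 = b*p1 - a*p2"
  define z2 where "z2 = c*p1 - b*p2"
  define w1 where "w1 = a*z1 + b*z2"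
  define w2 where "w2 = b*z1 + c*z2"
  define N where "N = c*w1^2 - 2*b*w1*w2 + a*w2^2"
  define D where "D = N / d"
  define q1 where "q1 = w1 / sqrt D"
  define q2 where "q2 = w2 / sqrt D"
  note C = core[OF a0 d0[unfolded d_def] Q, folded d_def z1_def z2_def, folded w1_def w2_def,
     folded N_def, folded D_def, folded q1_def q2_def]
  define q :: "real^2" where "q = vector [q1, q2]"
  have x0e: "x0 = vector [p1, p2]" unfolding p1_def p2_def by (simp add: vec_eq_iff forall_2)
  define v1 where "v1 = x0 + q"
  define v2 where "v2 = x0 - q"
  have qE: "q \<in> ellipse_of A" unfolding ell q_def using C(2) by simp
  have x0E: "x0 \<in> ellipse_of A" by (rule assms(2))
  have negE: "- x \<in> ellipse_of A" if "x \<in> ellipse_of A" for x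
    using that unfolding ell by simp
  have verts: "par_vertices v1 v2 \<subseteq> {x0, q, -q, -x0}"
  proof
    fix y assume "y \<in> par_vertices v1 v2"
    then obtain s t :: real where st: "s \<in> {-1,1}" "t \<in> {-1,1}"
      and y: "y = (1/2) *\<^sub>R (s *\<^sub>R v1 + t *\<^sub>R v2)"
      unfolding par_vertices_def by blast
    have y2: "y = ((s+t)/2) *\<^sub>R x0 + ((s-t)/2) *\<^sub>R q"
      unfolding y v1_def v2_def by (simp add: vec_eq_iff field_simps)
    show "y \<in> {x0, q, -q, -x0}"
      using st unfolding y2 by auto
  qed
  have x0V: "x0 \<in> par_vertices v1 v2"
  proof -
    have "x0 = (1/2) *\<^sub>R (1 *\<^sub>R v1 + 1 *\<^sub>R v2)" unfolding v1_def v2_def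
      by (simp add: vec_eq_iff field_simps)
    thus ?thesis unfolding par_vertices_def by blast
  qed
  have indep: "pair_lin_indep v1 v2"
    unfolding pair_lin_indep_def
  proof (intro allI impI)
    fix x y :: real
    assume "x *\<^sub>R v1 + y *\<^sub>R v2 = 0"
    hence e1: "(x+y)*p1 + (x-y)*q1 = 0" and e2: "(x+y)*p2 + (x-y)*q2 = 0"
      unfolding v1_def v2_def x0e q_def by (auto simp: vec_eq_iff forall_2 algebra_simps)
    have "(x+y) * (p1*q2 - p2*q1) = 0" using e1 e2 by algebra
    hence s0: "x + y = 0" using C(3) by simp
    have "(x-y) * (p1*q2 - p2*q1) = 0" using e1 e2 by algebra
    hence "x - y = 0" using C(3) by simp
    with s0 show "x = 0 \<and> y = 0" by simp
  qed
  have per: "par_perimeter v1 v2 = 4 * sqrt (a + c)"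
  proof -
    have "norm v1 + norm v2 = 2 * sqrt (a + c)"
      unfolding norm2 v1_def v2_def x0e q_def using C(4) by simp
    thus ?thesis unfolding par_perimeter_def by simp
  qed
  have "sqrt d * sqrt ((a+c)/d) = sqrt (a+c)"
    using d0 by (simp add: real_sqrt_mult[symmetric])
  show ?thesis
  proof (intro exI conjI)
    show "inscribed_in v1 v2 (ellipse_of A)" unfolding inscribed_in_def
      using indep verts x0E qE negE by blast
    show "x0 \<in> par_vertices v1 v2" by (rule x0V)
    show "par_perimeter v1 v2 = 4 * sqrt (det A) * sqrt (trace (matrix_inv A))"
      unfolding per detA trB using \<open>sqrt d * sqrt ((a+c)/d) = sqrt (a+c)\<close> by simp
    show "par_perimeter v1 v2 = 4 * sqrt (trace A)" unfolding per trA ..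
  qed
qed

end
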